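(* For each $n\ge1$ there is a bijection $\psi'$ from the set of plane trees with $n$ edges to $\mathfrak S_n(132)$ such that, for every such tree $T$ and $\pi=\psi'(T)$: (1) the number of young leaves of $T$ equals the number of double ascents of $\pi(n+1)=(\pi_1,\dots,\pi_n,n+1)$; (2) the number of old leaves of $T$ equals the number of ascending runs of $\pi(n+1)$.
   Context: A plane tree is a rooted tree in which the children of each vertex are linearly ordered. A leaf is a vertex with no children; the one-vertex tree has no leaves. A leaf is old if it is the leftmost child of its parent, young otherwise. $\mathfrak S_n(132)$ is the set of permutations of $\{1,\dots,n\}$ with no indices $a<b<c$ such that $\pi_a<\pi_c<\pi_b$. For a sequence $\sigma$, a double ascent is an index $i$ with $\sigma_i<\sigma_{i+1}<\sigma_{i+2}$, and an ascending run is a maximal increasing sequence $\sigma_i<\sigma_{i+1}<\cdots<\sigma_{i+k}$ of consecutive entries with $k\ge1$. *)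

theory Defs
  imports Main
begin

datatype ptree = Node "ptree list"

primrec edges :: "ptree \<Rightarrow> nat" where
  "edges (Node ts) = length ts + sum_list (map edges ts)"

text \<open>A leaf is a (necessarily non-root) vertex with no children; the root of the
one-vertex tree is not a leaf. It is old if it is the leftmost child of its parent,
young otherwise.\<close>
primrec old_leaves :: "ptree \<Rightarrow> nat" where
  "old_leaves (Node ts) =
     (case ts of [] \<Rightarrow> 0 | t # _ \<Rightarrow> (if t = Node [] then 1 else 0))
     + sum_list (map old_leaves ts)"

primrec young_leaves :: "ptree \<Rightarrow> nat" where
  "young_leaves (Node ts) =
     length (filter (\<lambda>t. t = Node []) (drop 1 ts))
     + sum_list (map young_leaves ts)"

definition av132 :: "nat \<Rightarrow> nat list set" where
  "av132 n = {\<pi>. length \<pi> = n \<and> distinct \<pi> \<and> set \<pi> = {1..n} \<and>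
      \<not> (\<exists>a b c. a < b \<and> b < c \<and> c < n \<and> \<pi> ! a < \<pi> ! c \<and> \<pi> ! c < \<pi> ! b)}"

definition double_ascents :: "nat list \<Rightarrow> nat" where
  "double_ascents \<sigma> = card {i. i + 2 < length \<sigma> \<and> \<sigma> ! i < \<sigma> ! (i+1) \<and> \<sigma> ! (i+1) < \<sigma> ! (i+2)}"

text \<open>Ascending runs: maximal increasing segments sigma_i < ... < sigma_j of
consecutive entries with j > i, represented by the pair (i, j).\<close>
definition asc_runs :: "nat list \<Rightarrow> nat" where
  "asc_runs \<sigma> = card {(i, j). i < j \<and> j < length \<sigma> \<and>
      (\<forall>k. i \<le> k \<and> k < j \<longrightarrow> \<sigma> ! k < \<sigma> ! (k+1)) \<and>
      (i = 0 \<or> \<not> \<sigma> ! (i - 1) < \<sigma> ! i) \<and>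
      (j + 1 = length \<sigma> \<or> \<not> \<sigma> ! j < \<sigma> ! (j+1))}"

end

theory Submission
  imports Defs
begin


function psi :: "ptree \<Rightarrow> nat list" and psil :: "ptree list \<Rightarrow> nat list" where
  "psi (Node ts) = psil (rev ts)"
| "psil [] = []"
| "psil (t # rs) = map (\<lambda>x. x + edges t) (psil rs) @ [edges (Node rs) + edges t + 1] @ psi t"
  by pat_completeness auto
termination
  by (relation "measure (\<lambda>x. case x of Inl t \<Rightarrow> 2 * size t | Inr rs \<Rightarrow> 2 * size_list size rs + 1)")
     (auto simp: size_list_conv_sum_list rev_map[symmetric] sum_list_rev)

lemma sum_list_map_rev[simp]: "sum_list (map f (rev xs)) = sum_list (map f xs)" for f :: "'a \<Rightarrow> nat"
  by (simp only: rev_map[symmetric] sum_list_rev)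

lemma edges_rev[simp]: "edges (Node (rev ts)) = edges (Node ts)"
  by (simp only: edges.simps length_rev rev_map[symmetric] sum_list_rev)

lemma psi_snoc: "psi (Node (ts @ [t])) =
   map (\<lambda>x. x + edges t) (psi (Node ts)) @ [edges (Node ts) + edges t + 1] @ psi t"
  by simp

lemma psi_Nil[simp]: "psi (Node []) = []" by simp

lemma edges_snoc: "edges (Node (ts @ [t])) = edges (Node ts) + edges t + 1"
  by simp

lemma tree_snoc_induct:
  assumes "\<And>cs. (\<forall>t\<in>set cs. Q t) \<Longrightarrow> Q (Node cs)"
  shows "Q T"
  by (induction T) (auto intro: assms)

lemma snoc_ind:
  assumes base: "Q (Node [])"
    and step: "\<And>ts t. Q (Node ts) \<Longrightarrow> Q t \<Longrightarrow> Q (Node (ts @ [t]))"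
  shows "Q T"
proof (induction T rule: tree_snoc_induct)
  case (1 cs)
  then show ?case
  proof (induction cs rule: rev_induct)
    case Nil then show ?case using base by simp
  next
    case (snoc x xs) then show ?case using step by simp
  qed
qed

lemma psi_props: "length (psi T) = edges T \<and> set (psi T) = {1..edges T} \<and> distinct (psi T)"
proof (induction T rule: snoc_ind)
  case 1 then show ?case by simp
next
  case (2 ts t)
  let ?e = "edges t" and ?k = "edges (Node ts)"
  have s1: "set (map (\<lambda>x. x + ?e) (psi (Node ts))) = {?e+1..?k+?e}"
    using 2 by (auto simp: image_iff intro!: bexI[where x="_ - ?e"])
  show ?case unfolding psi_snoc edges_snoc
    using 2 s1 by (auto simp: distinct_map inj_on_def)
qed




definition av :: "nat list \<Rightarrow> bool" where
  "av L \<longleftrightarrow> \<not> (\<exists>a b c. a < b \<and> b < c \<and> c < length L \<and> L ! a < L ! c \<and> L ! c < L ! b)"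

lemma av_map_add[simp]: "av (map (\<lambda>x. x + e) L) = av L"
  unfolding av_def by auto

lemma nth_split: "(\<alpha> @ m # \<beta>) ! i = (if i < length \<alpha> then \<alpha> ! i else if i = length \<alpha> then m else \<beta> ! (i - length \<alpha> - 1))"
  by (simp add: nth_append nth_Cons')

lemma av_split:
  assumes A: "\<forall>x\<in>set \<alpha>. x < m" and B: "\<forall>x\<in>set \<beta>. x < m"
  shows "av (\<alpha> @ m # \<beta>) \<longleftrightarrow> av \<alpha> \<and> av \<beta> \<and> (\<forall>x\<in>set \<alpha>. \<forall>y\<in>set \<beta>. \<not> x < y)"
proof
  assume h: "av (\<alpha> @ m # \<beta>)"
  let ?L = "\<alpha> @ m # \<beta>"
  have 1: "av \<alpha>" unfolding av_def
  proof clarify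
    fix a b c assume *: "a < b" "b < c" "c < length \<alpha>" "\<alpha> ! a < \<alpha> ! c" "\<alpha> ! c < \<alpha> ! b"
    have "?L ! a = \<alpha> ! a" "?L ! b = \<alpha> ! b" "?L ! c = \<alpha> ! c"
      using * by (simp_all add: nth_split)
    moreover have "c < length ?L" using * by simp
    ultimately show False using h * unfolding av_def by metis
  qed
  have 2: "av \<beta>" unfolding av_def
  proof clarify
    fix a b c assume *: "a < b" "b < c" "c < length \<beta>" "\<beta> ! a < \<beta> ! c" "\<beta> ! c < \<beta> ! b"
    have "?L ! (a + length \<alpha> + 1) = \<beta> ! a" "?L ! (b + length \<alpha> + 1) = \<beta> ! b" "?L ! (c + length \<alpha> + 1) = \<beta> ! c"
      by (simp_all add: nth_split)
    moreover have "a + length \<alpha> + 1 < b + length \<alpha> + 1" "b + length \<alpha> + 1 < c + length \<alpha> + 1"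
       "c + length \<alpha> + 1 < length ?L" using * by simp_all
    ultimately show False using h * unfolding av_def by metis
  qed
  have 3: "\<forall>x\<in>set \<alpha>. \<forall>y\<in>set \<beta>. \<not> x < y"
  proof (intro ballI notI)
    fix x y assume x: "x \<in> set \<alpha>" and y: "y \<in> set \<beta>" and xy: "x < y"
    obtain a where a: "a < length \<alpha>" "\<alpha> ! a = x" using x by (auto simp: in_set_conv_nth)
    obtain c where c: "c < length \<beta>" "\<beta> ! c = y" using y by (auto simp: in_set_conv_nth)
    have "?L ! a = x" "?L ! length \<alpha> = m" "?L ! (c + length \<alpha> + 1) = y"
      using a c by (simp_all add: nth_split)
    moreover have "y < m" using B y by auto
    moreover have "a < length \<alpha>" "length \<alpha> < c + length \<alpha> + 1" "c + length \<alpha> + 1 < length ?L"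
      using a c by simp_all
    ultimately show False using h xy unfolding av_def by metis
  qed
  show "av \<alpha> \<and> av \<beta> \<and> (\<forall>x\<in>set \<alpha>. \<forall>y\<in>set \<beta>. \<not> x < y)" using 1 2 3 by blast
next
  assume h: "av \<alpha> \<and> av \<beta> \<and> (\<forall>x\<in>set \<alpha>. \<forall>y\<in>set \<beta>. \<not> x < y)"
  show "av (\<alpha> @ m # \<beta>)" unfolding av_def
  proof clarify
    fix a b c assume *: "a < b" "b < c" "c < length (\<alpha> @ m # \<beta>)"
      "(\<alpha> @ m # \<beta>) ! a < (\<alpha> @ m # \<beta>) ! c" "(\<alpha> @ m # \<beta>) ! c < (\<alpha> @ m # \<beta>) ! b"
    let ?la = "length \<alpha>"
    have inA: "\<And>i. i < ?la \<Longrightarrow> \<alpha> ! i \<in> set \<alpha>" by simp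
    have inB: "\<And>i. i > ?la \<Longrightarrow> i < length (\<alpha> @ m # \<beta>) \<Longrightarrow> \<beta> ! (i - ?la - 1) \<in> set \<beta>" by simp
    show False
    proof (cases "c < ?la")
      case True
      then show ?thesis using * h unfolding av_def by (auto simp: nth_split)
    next
      case c: False
      show ?thesis
      proof (cases "c = ?la")
        case True
        then have "b < ?la" using * by simp
        then have "\<alpha> ! b < m" using A by simp
        then show ?thesis using * \<open>b < ?la\<close> True by (auto simp: nth_split split: if_splits)
      next
        case False
        with c have c': "c > ?la" by simp
        show ?thesis
        proof (cases "a < ?la")
          case True
          then show ?thesis using * h inA[OF True] inB[OF c'] c' by (auto simp: nth_split)
        next
          case False
          show ?thesis
          proof (cases "a = ?la")
            case True
            have "\<beta> ! (c - ?la - 1) < m" using B inB[OF c'] * by simp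
            then show ?thesis using * True c' by (auto simp: nth_split)
          next
            case False
            with \<open>\<not> a < ?la\<close> have a': "a > ?la" by simp
            have "\<beta> ! (a - ?la - 1) < \<beta> ! (c - ?la - 1)" "\<beta> ! (c - ?la - 1) < \<beta> ! (b - ?la - 1)"
              using * a' c' by (auto simp: nth_split)
            moreover have "a - ?la - 1 < b - ?la - 1" "b - ?la - 1 < c - ?la - 1" "c - ?la - 1 < length \<beta>"
              using * a' c' by auto
            ultimately show ?thesis using h unfolding av_def by blast
          qed
        qed
      qed
    qed
  qed
qed




lemma av132_eq: "av132 n = {\<pi>. length \<pi> = n \<and> distinct \<pi> \<and> set \<pi> = {1..n} \<and> av \<pi>}"
  unfolding av132_def av_def by auto

lemma psi_av: "av (psi T)"
proof (induction T rule: snoc_ind)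
  case 1 then show ?case by (simp add: av_def)
next
  case (2 ts t)
  let ?e = "edges t" and ?k = "edges (Node ts)"
  have A: "set (psi (Node ts)) = {1..?k}" and B: "set (psi t) = {1..?e}" using psi_props by blast+
  have "av (map (\<lambda>x. x + ?e) (psi (Node ts)) @ (?k + ?e + 1) # psi t)"
    by (subst av_split) (use 2 A B in auto)
  then show ?case by (simp add: psi_snoc)
qed

lemma psi_in: "psi T \<in> av132 (edges T)"
  using psi_props psi_av unfolding av132_eq by blast

lemma edges0: "edges T = 0 \<Longrightarrow> T = Node []"
  by (cases T) auto

lemma snoc_exhaust: "T \<noteq> Node [] \<Longrightarrow> \<exists>ts t. T = Node (ts @ [t])"
  by (cases T) (metis rev_exhaust)

lemma psi_inj: "\<forall>T2. psi T = psi T2 \<longrightarrow> T = T2"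
proof (induction T rule: snoc_ind)
  case 1
  show ?case
  proof (intro allI impI)
    fix T2 assume "psi (Node []) = psi T2"
    then have "length (psi T2) = 0" by simp
    then have "edges T2 = 0" using psi_props[of T2] by simp
    then show "Node [] = T2" using edges0 by simp
  qed
next
  case (2 ts t)
  show ?case
  proof (intro allI impI)
    fix T2 assume eq: "psi (Node (ts @ [t])) = psi T2"
    have "T2 \<noteq> Node []"
    proof
      assume "T2 = Node []"
      with eq have "psi (Node (ts @ [t])) = []" by simp
      then show False by (simp only: psi_snoc) simp
    qed
    then obtain ts2 t2 where T2: "T2 = Node (ts2 @ [t2])" using snoc_exhaust by blast
    let ?e = "edges t" and ?k = "edges (Node ts)"
    let ?e2 = "edges t2" and ?k2 = "edges (Node ts2)"
    have len: "?k + ?e + 1 = ?k2 + ?e2 + 1"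
      using eq T2 psi_props[of "Node (ts@[t])"] psi_props[of T2] by (simp only: edges_snoc)
    have A: "set (psi (Node ts)) = {1..?k}" and B: "set (psi t) = {1..?e}" using psi_props by blast+
    have eq2: "map (\<lambda>x. x + ?e) (psi (Node ts)) @ (?k + ?e + 1) # psi t =
          map (\<lambda>x. x + ?e2) (psi (Node ts2)) @ (?k + ?e + 1) # psi t2"
      using eq T2 len by (simp add: psi_snoc)
    have n1: "?k + ?e + 1 \<notin> set (map (\<lambda>x. x + ?e) (psi (Node ts)))" and n2: "?k + ?e + 1 \<notin> set (psi t)"
      using A B by auto
    have e12: "map (\<lambda>x. x + ?e) (psi (Node ts)) = map (\<lambda>x. x + ?e2) (psi (Node ts2)) \<and> psi t = psi t2"
      using eq2 append_Cons_eq_iff[OF n1 n2] by (simp only:)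
    then have e1: "map (\<lambda>x. x + ?e) (psi (Node ts)) = map (\<lambda>x. x + ?e2) (psi (Node ts2))"
      and e2: "psi t = psi t2" by auto
    have tt: "t = t2" using 2 e2 by blast
    then have "psi (Node ts) = psi (Node ts2)" using e1 by (simp add: inj_map_eq_map inj_on_def)
    then have "Node ts = Node ts2" using 2 by blast
    then show "Node (ts @ [t]) = T2" using T2 tt by simp
  qed
qed

lemma distinct_interval: "distinct xs \<Longrightarrow> set xs \<subseteq> {1..length xs} \<Longrightarrow> set xs = {1..length xs}"
  by (simp add: card_subset_eq distinct_card)

lemma psi_surj: "\<pi> \<in> av132 n \<Longrightarrow> \<exists>T. edges T = n \<and> psi T = \<pi>"
proof (induction n arbitrary: \<pi> rule: less_induct)
  case (less n)
  show ?case
  proof (cases "n = 0")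
    case True
    then have "\<pi> = []" using less.prems unfolding av132_eq by auto
    then show ?thesis using True by (intro exI[of _ "Node []"]) simp
  next
    case False
    have P: "length \<pi> = n" "distinct \<pi>" "set \<pi> = {1..n}" "av \<pi>" using less.prems unfolding av132_eq by auto
    then have "n \<in> set \<pi>" using False by auto
    then obtain \<alpha> \<beta> where pi: "\<pi> = \<alpha> @ n # \<beta>" by (meson split_list)
    have dis: "distinct \<alpha>" "distinct \<beta>" "n \<notin> set \<alpha>" "n \<notin> set \<beta>" "set \<alpha> \<inter> set \<beta> = {}"
      using P(2) pi by auto
    have sa: "set \<alpha> \<subseteq> {1..n}" and sb: "set \<beta> \<subseteq> {1..n}" using P(3) pi by auto
    have lt: "\<forall>x\<in>set \<alpha>. x < n" "\<forall>x\<in>set \<beta>. x < n" "\<forall>x\<in>set \<alpha>. 0 < x" "\<forall>x\<in>set \<beta>. 0 < x"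
    proof -
      show "\<forall>x\<in>set \<alpha>. x < n" using sa dis(3) by (auto simp: subset_iff order.order_iff_strict)
      show "\<forall>x\<in>set \<beta>. x < n" using sb dis(4) by (auto simp: subset_iff order.order_iff_strict)
      show "\<forall>x\<in>set \<alpha>. 0 < x" using sa by auto
      show "\<forall>x\<in>set \<beta>. 0 < x" using sb by auto
    qed
    have avs: "av \<alpha>" "av \<beta>" and cross: "\<forall>x\<in>set \<alpha>. \<forall>y\<in>set \<beta>. \<not> x < y"
      using av_split[OF lt(1,2)] P(4) pi by auto
    have cross2: "\<forall>x\<in>set \<alpha>. \<forall>y\<in>set \<beta>. y < x"
    proof (intro ballI)
      fix x y assume "x \<in> set \<alpha>" "y \<in> set \<beta>"
      then have "\<not> x < y" "x \<noteq> y" using cross dis(5) by auto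
      then show "y < x" by simp
    qed
    define e where "e = length \<beta>"
    define k where "k = length \<alpha>"
    have nke: "n = k + e + 1" using P(1) pi unfolding e_def k_def by simp
    have un: "set \<alpha> \<union> set \<beta> \<union> {n} = {1..n}" using P(3) pi by auto
    have Bsub: "set \<beta> \<subseteq> {1..e}"
    proof
      fix y assume y: "y \<in> set \<beta>"
      show "y \<in> {1..e}"
      proof (rule ccontr)
        assume "y \<notin> {1..e}"
        then have ye: "y > e" using lt(4) y by auto
        have "{1..y} \<subseteq> set \<beta>"
        proof
          fix z assume z: "z \<in> {1..y}"
          have yn: "y < n" using lt(2) y by blast
          have zn: "z \<in> {1..n}" "z \<noteq> n" using z yn by simp_all
          have "z \<in> set \<alpha> \<union> set \<beta> \<union> {n}" using zn(1) un by blast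
          then have "z \<in> set \<alpha> \<or> z \<in> set \<beta>" using zn(2) by blast
          then show "z \<in> set \<beta>" using cross2 y z by fastforce
        qed
        then have "card {1..y} \<le> card (set \<beta>)" by (intro card_mono) simp_all
        then show False using ye dis(2) unfolding e_def by (simp add: distinct_card)
      qed
    qed
    then have Bset: "set \<beta> = {1..e}" using distinct_interval[OF dis(2)] unfolding e_def by blast
    have Agt: "\<forall>x\<in>set \<alpha>. e < x"
    proof
      fix x assume x: "x \<in> set \<alpha>"
      show "e < x"
      proof (cases "e = 0")
        case False
        then have "1 \<in> set \<beta>" using Bset by auto
        have "e \<in> set \<beta>" using Bset False by auto
        then show ?thesis using cross2 x by blast
      qed (use lt(3) x in auto)
    qed
    define \<alpha>' where "\<alpha>' = map (\<lambda>x. x - e) \<alpha>"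
    have amap: "\<alpha> = map (\<lambda>x. x + e) \<alpha>'" unfolding \<alpha>'_def using Agt by (induction \<alpha>) auto
    have A'dis: "distinct \<alpha>'" using dis(1) amap by (simp add: distinct_map)
    have "set \<alpha>' \<subseteq> {1..k}"
    proof
      fix z assume "z \<in> set \<alpha>'"
      then obtain x where x: "x \<in> set \<alpha>" "z = x - e" unfolding \<alpha>'_def by auto
      have "e < x" "x < n" using x Agt lt(1) by auto
      then show "z \<in> {1..k}" using x nke by auto
    qed
    then have A'set: "set \<alpha>' = {1..k}" using distinct_interval[OF A'dis] unfolding \<alpha>'_def k_def by simp
    have A'av: "av \<alpha>'" using avs(1) amap by simp
    have "\<alpha>' \<in> av132 k" using A'dis A'set A'av unfolding av132_eq \<alpha>'_def k_def by simp
    then obtain TA where TA: "edges TA = k" "psi TA = \<alpha>'" using less.IH[of k \<alpha>'] nke by auto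
    have "\<beta> \<in> av132 e" using dis(2) Bset avs(2) unfolding av132_eq e_def by simp
    then obtain TB where TB: "edges TB = e" "psi TB = \<beta>" using less.IH[of e \<beta>] nke by auto
    obtain ts where ts: "TA = Node ts" by (cases TA) auto
    show ?thesis
    proof (intro exI[of _ "Node (ts @ [TB])"] conjI)
      show "edges (Node (ts @ [TB])) = n" using TA TB ts nke by (simp only: edges_snoc)
      show "psi (Node (ts @ [TB])) = \<pi>" using TA TB ts nke pi amap by (simp add: psi_snoc)
    qed
  qed
qed




fun asc :: "nat list \<Rightarrow> bool list" where
  "asc (x # y # r) = (x < y) # asc (y # r)"
| "asc _ = []"

fun db :: "bool \<Rightarrow> bool list \<Rightarrow> nat" where
  "db b [] = 0"
| "db b (a # p) = (if a \<and> b then 1 else 0) + db a p"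

fun rb :: "bool \<Rightarrow> bool list \<Rightarrow> nat" where
  "rb b [] = 0"
| "rb b (a # p) = (if a \<and> \<not> b then 1 else 0) + rb a p"

lemma length_asc[simp]: "length (asc xs) = length xs - 1"
  by (induction xs rule: asc.induct) auto

lemma nth_asc: "i + 1 < length xs \<Longrightarrow> asc xs ! i = (xs ! i < xs ! (i+1))"
proof (induction xs arbitrary: i rule: asc.induct)
  case (1 x y r)
  then show ?case by (cases i) auto
qed auto

lemma card_Suc_split:
  assumes "finite {i. Q i}"
  shows "card {i. Q i} = (if Q 0 then 1 else 0) + card {i. Q (Suc i)}"
proof -
  have eq: "{i. Q i} = (if Q 0 then {0} else {}) \<union> Suc ` {i. Q (Suc i)}"
  proof (rule set_eqI)
    fix x show "x \<in> {i. Q i} \<longleftrightarrow> x \<in> (if Q 0 then {0} else {}) \<union> Suc ` {i. Q (Suc i)}"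
      by (cases x) auto
  qed
  have fin: "finite {i. Q (Suc i)}"
  proof -
    have "Suc ` {i. Q (Suc i)} \<subseteq> {i. Q i}" by auto
    then have "finite (Suc ` {i. Q (Suc i)})" using assms finite_subset by blast
    then show ?thesis using finite_imageD inj_Suc by blast
  qed
  have "card {i. Q i} = card (if Q 0 then {0} else {}) + card (Suc ` {i. Q (Suc i)})"
    unfolding eq by (cases "Q 0") (auto simp: card_insert_if fin)
  also have "card (Suc ` {i. Q (Suc i)}) = card {i. Q (Suc i)}" by (simp add: card_image)
  finally show ?thesis by (cases "Q 0") simp_all
qed

lemma db_card: "db b p = card {i. i < length p \<and> p ! i \<and> (if i = 0 then b else p ! (i - 1))}"
proof (induction p arbitrary: b)
  case Nil then show ?case by simp
next
  case (Cons a p)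
  have "card {i. i < length (a # p) \<and> (a # p) ! i \<and> (if i = 0 then b else (a # p) ! (i - 1))}
     = (if a \<and> b then 1 else 0) + card {i. i < length p \<and> p ! i \<and> (if i = 0 then a else p ! (i - 1))}"
    by (subst card_Suc_split) (auto simp: nth_Cons' intro!: arg_cong[where f=card])
  then show ?case using Cons by simp
qed

lemma rb_card: "rb b p = card {i. i < length p \<and> p ! i \<and> (if i = 0 then \<not> b else \<not> p ! (i - 1))}"
proof (induction p arbitrary: b)
  case Nil then show ?case by simp
next
  case (Cons a p)
  have "card {i. i < length (a # p) \<and> (a # p) ! i \<and> (if i = 0 then \<not> b else \<not> (a # p) ! (i - 1))}
     = (if a \<and> \<not> b then 1 else 0) + card {i. i < length p \<and> p ! i \<and> (if i = 0 then \<not> a else \<not> p ! (i - 1))}"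
    by (subst card_Suc_split) (auto simp: nth_Cons' intro!: arg_cong[where f=card])
  then show ?case using Cons by simp
qed

lemma da_eq: "double_ascents \<sigma> = db False (asc \<sigma>)"
proof -
  let ?p = "asc \<sigma>"
  have "db False ?p = card {i. i < length ?p \<and> ?p ! i \<and> (if i = 0 then False else ?p ! (i - 1))}"
    by (rule db_card)
  also have "\<dots> = card {i. Suc i < length ?p \<and> ?p ! Suc i \<and> ?p ! i}"
    by (subst card_Suc_split) auto
  also have "{i. Suc i < length ?p \<and> ?p ! Suc i \<and> ?p ! i} =
     {i. i + 2 < length \<sigma> \<and> \<sigma> ! i < \<sigma> ! (i+1) \<and> \<sigma> ! (i+1) < \<sigma> ! (i+2)}"
  proof (rule Collect_cong)
    fix i
    show "(Suc i < length ?p \<and> ?p ! Suc i \<and> ?p ! i) =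
      (i + 2 < length \<sigma> \<and> \<sigma> ! i < \<sigma> ! (i+1) \<and> \<sigma> ! (i+1) < \<sigma> ! (i+2))"
    proof (cases "i + 2 < length \<sigma>")
      case True
      then show ?thesis using nth_asc[of i \<sigma>] nth_asc[of "Suc i" \<sigma>] by auto
    qed auto
  qed
  finally show ?thesis unfolding double_ascents_def by simp
qed

lemma runs_eq: "asc_runs \<sigma> = rb False (asc \<sigma>)"
proof -
  let ?p = "asc \<sigma>"
  let ?N = "length \<sigma>"
  define R where "R = {(i, j). i < j \<and> j < length \<sigma> \<and>
      (\<forall>k. i \<le> k \<and> k < j \<longrightarrow> \<sigma> ! k < \<sigma> ! (k+1)) \<and>
      (i = 0 \<or> \<not> \<sigma> ! (i - 1) < \<sigma> ! i) \<and>
      (j + 1 = length \<sigma> \<or> \<not> \<sigma> ! j < \<sigma> ! (j+1))}"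
  define S where "S = {i. i < length ?p \<and> ?p ! i \<and> (if i = 0 then \<not> False else \<not> ?p ! (i - 1))}"
  have inj: "inj_on fst R"
  proof (rule inj_onI)
    fix x y assume x: "x \<in> R" and y: "y \<in> R" and f: "fst x = fst y"
    obtain i j where xij: "x = (i, j)" by (cases x)
    obtain j' where yij: "y = (i, j')" using f xij by (cases y) auto
    have "\<not> j < j'" if "(i, j) \<in> R" "(i, j') \<in> R" for j j'
    proof
      assume jj: "j < j'"
      then have "\<sigma> ! j < \<sigma> ! (j+1)" "j + 1 \<noteq> length \<sigma>" using that unfolding R_def by auto
      then show False using that(1) unfolding R_def by auto
    qed
    then have "j = j'" using x y xij yij by (meson linorder_neqE_nat)
    then show "x = y" using xij yij by simp
  qed
  have img: "fst ` R = S"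
  proof
    show "fst ` R \<subseteq> S"
    proof
      fix i assume "i \<in> fst ` R"
      then obtain j where ij: "(i, j) \<in> R" by auto
      then have a: "i < j" "j < ?N" "\<sigma> ! i < \<sigma> ! (i+1)" "i = 0 \<or> \<not> \<sigma> ! (i - 1) < \<sigma> ! i"
        unfolding R_def by auto
      have "?p ! i" using a nth_asc[of i \<sigma>] by auto
      moreover have "i \<noteq> 0 \<Longrightarrow> \<not> ?p ! (i - 1)" using a nth_asc[of "i - 1" \<sigma>] by auto
      ultimately show "i \<in> S" unfolding S_def using a by auto
    qed
  next
    show "S \<subseteq> fst ` R"
    proof
      fix i assume "i \<in> S"
      then have i: "i + 1 < ?N" "?p ! i" "i \<noteq> 0 \<Longrightarrow> \<not> ?p ! (i - 1)" unfolding S_def by (auto split: if_splits)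
      have asc_i: "\<sigma> ! i < \<sigma> ! (i+1)" using i nth_asc[of i \<sigma>] by auto
      have st: "i = 0 \<or> \<not> \<sigma> ! (i - 1) < \<sigma> ! i" using i nth_asc[of "i - 1" \<sigma>] by auto
      define P where "P j \<longleftrightarrow> i < j \<and> (j + 1 = ?N \<or> \<not> \<sigma> ! j < \<sigma> ! (j+1))" for j
      define j where "j = (LEAST j. P j)"
      have P1: "P (?N - 1)" unfolding P_def using i by auto
      have Pj: "P j" unfolding j_def using P1 by (rule LeastI)
      have jle: "j \<le> ?N - 1" unfolding j_def using P1 by (rule Least_le)
      have mid: "\<sigma> ! k < \<sigma> ! (k+1)" if "i \<le> k" "k < j" for k
      proof (cases "k = i")
        case True then show ?thesis using asc_i by simp
      next
        case False
        then have "\<not> P k" using that not_less_Least unfolding j_def by blast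
        then show ?thesis using that False unfolding P_def by auto
      qed
      have "(i, j) \<in> R" unfolding R_def using Pj jle mid st i unfolding P_def by auto
      then show "i \<in> fst ` R" by force
    qed
  qed
  have "asc_runs \<sigma> = card R" unfolding asc_runs_def R_def by simp
  also have "\<dots> = card S" using card_image[OF inj] img by simp
  also have "\<dots> = rb False ?p" unfolding S_def by (simp add: rb_card)
  finally show ?thesis .
qed

lemma db_append: "db b (p @ q) = db b p + db (if p = [] then b else last p) q"
  by (induction p arbitrary: b) auto

lemma rb_append: "rb b (p @ q) = rb b p + rb (if p = [] then b else last p) q"
  by (induction p arbitrary: b) auto

lemma asc_append: "xs \<noteq> [] \<Longrightarrow> ys \<noteq> [] \<Longrightarrow> asc (xs @ ys) = asc xs @ (last xs < hd ys) # asc ys"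
proof (induction xs)
  case Nil then show ?case by simp
next
  case (Cons x xs)
  then show ?case by (cases xs; cases ys) auto
qed

lemma asc_map_add[simp]: "asc (map (\<lambda>x. x + c) xs) = asc xs"
  by (induction xs rule: asc.induct) auto

lemma asc_snoc_top: "\<forall>x\<in>set xs. x < a \<and> x < b \<Longrightarrow> asc (xs @ [a]) = asc (xs @ [b])"
proof (induction xs)
  case Nil then show ?case by simp
next
  case (Cons x xs)
  then show ?case by (cases xs) auto
qed

lemma young_snoc: "young_leaves (Node (ts @ [t])) =
   young_leaves (Node ts) + young_leaves t + (if ts \<noteq> [] \<and> t = Node [] then 1 else 0)"
  by (cases ts) auto

lemma old_snoc: "old_leaves (Node (ts @ [t])) =
   old_leaves (Node ts) + old_leaves t + (if ts = [] \<and> t = Node [] then 1 else 0)"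
  by (cases ts) auto




lemma stats: "young_leaves T = db False (asc (psi T @ [edges T + 1])) \<and>
              old_leaves T = rb False (asc (psi T @ [edges T + 1]))"
proof (induction T rule: snoc_ind)
  case 1 then show ?case by simp
next
  case (2 ts t)
  define A where "A = psi (Node ts)"
  define B where "B = psi t"
  define k where "k = edges (Node ts)"
  define e where "e = edges t"
  define PA where "PA = asc (A @ [k + 1])"
  define PB where "PB = asc (B @ [e + 1])"
  have Aset: "set A = {1..k}" and Bset: "set B = {1..e}" and lenA: "length A = k" and lenB: "length B = e"
    using psi_props unfolding A_def B_def k_def e_def by blast+
  have IH: "young_leaves (Node ts) = db False PA" "old_leaves (Node ts) = rb False PA"
           "young_leaves t = db False PB" "old_leaves t = rb False PB"
    using 2 unfolding PA_def PB_def A_def B_def k_def e_def by auto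
  have full: "psi (Node (ts @ [t])) @ [edges (Node (ts @ [t])) + 1] =
      (map (\<lambda>x. x + e) (A @ [k + 1])) @ (B @ [k + e + 2])"
    unfolding psi_snoc edges_snoc A_def B_def k_def e_def by simp
  have ascY: "asc (B @ [k + e + 2]) = PB"
    unfolding PB_def using Bset by (intro asc_snoc_top) auto
  have asc_full: "asc (psi (Node (ts @ [t])) @ [edges (Node (ts @ [t])) + 1]) =
      PA @ (k + e + 1 < hd (B @ [k + e + 2])) # PB"
  proof -
    have asX: "asc (map (\<lambda>x. x + e) (A @ [k + 1])) = PA" unfolding PA_def by (rule asc_map_add)
    have "asc ((map (\<lambda>x. x + e) (A @ [k + 1])) @ (B @ [k + e + 2])) =
       asc (map (\<lambda>x. x + e) (A @ [k + 1])) @ (last (map (\<lambda>x. x + e) (A @ [k + 1])) < hd (B @ [k + e + 2])) # asc (B @ [k + e + 2])"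
      by (rule asc_append) simp_all
    then show ?thesis unfolding full asX ascY by simp
  qed
  show ?case
  proof (cases "B = []")
    case True
    then have t: "t = Node []" using lenB edges0 unfolding e_def by simp
    have PB0: "PB = []" unfolding PB_def using True by simp
    have af: "asc (psi (Node (ts @ [t])) @ [edges (Node (ts @ [t])) + 1]) = PA @ [True]"
      using asc_full True PB0 by simp
    have PAe: "PA = [] \<longleftrightarrow> ts = []"
    proof -
      have "PA = [] \<longleftrightarrow> A = []" proof -
        have "length PA = length A" unfolding PA_def by simp
        then show ?thesis by auto
      qed
      also have "\<dots> \<longleftrightarrow> ts = []" using lenA unfolding k_def by (cases ts) auto
      finally show ?thesis .
    qed
    have lastPA: "ts \<noteq> [] \<Longrightarrow> last PA"
    proof -
      assume "ts \<noteq> []"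
      then have An: "A \<noteq> []" using lenA unfolding k_def by (cases ts) auto
      then have "last A \<in> set A" by simp
      then have "last A < k + 1" using Aset by auto
      then show "last PA" unfolding PA_def using asc_append[OF An, of "[k+1]"] by simp
    qed
    show ?thesis
      unfolding af young_snoc old_snoc db_append rb_append using IH t PAe lastPA
      by (cases "ts = []") auto
  next
    case False
    then have t: "t \<noteq> Node []" using lenB unfolding e_def by auto
    have "hd B \<in> set B" using False by simp
    then have "hd B \<le> e" using Bset by auto
    then have af: "asc (psi (Node (ts @ [t])) @ [edges (Node (ts @ [t])) + 1]) = PA @ False # PB"
      using asc_full False by simp
    show ?thesis
      unfolding af young_snoc old_snoc db_append rb_append using IH t
      by auto
  qed
qed

theorem mainTheorem13:
  fixes n :: nat
  assumes "n \<ge> 1"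
  shows "\<exists>\<psi>. bij_betw \<psi> {T. edges T = n} (av132 n) \<and>
           (\<forall>T. edges T = n \<longrightarrow>
              young_leaves T = double_ascents (\<psi> T @ [n+1]) \<and>
              old_leaves T = asc_runs (\<psi> T @ [n+1]))"
proof (intro exI[of _ psi] conjI allI impI)
  show "bij_betw psi {T. edges T = n} (av132 n)"
    unfolding bij_betw_def
  proof
    show "inj_on psi {T. edges T = n}" using psi_inj by (auto simp: inj_on_def)
    show "psi ` {T. edges T = n} = av132 n"
      using psi_in psi_surj by fastforce
  qed
  fix T assume "edges T = n"
  then show "young_leaves T = double_ascents (psi T @ [n+1])"
       "old_leaves T = asc_runs (psi T @ [n+1])"
    using stats[of T] by (auto simp: da_eq runs_eq)
qed


end
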